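(* Define the formal power series $z_1(g,\mathfrak{g})=\sum_{T} g^{e(T)}\,\mathfrak{g}^{m(T)}$, where the sum runs over all rooted plane trees $T$ (including the single-vertex tree) each of whose edges carries a mark from $\{+,0,-\}$, $e(T)$ is the number of edges, and $m(T)$ is the number of non-root vertices that are local maxima of the induced vertex labeling. Then $z_1$ is the unique formal power series in $g$ (with coefficients polynomial in $\mathfrak{g}$) with constant term $1$ satisfying $$3g^2 z_1^4-4g z_1^3+\big(1+2g(1-2\mathfrak{g})\big)z_1^2-1=0.$$ In particular $z_1=\frac{1-\sqrt{1-12g}}{6g}$ for $\mathfrak{g}=1$ and $z_1=\frac{1-\sqrt{1-4g}}{2g}$ for $\mathfrak{g}=0$.
   Context: A rooted plane tree is a finite tree embedded in the plane with a distinguished root vertex (and root corner); edges are oriented away from the root. Given marks in $\{+,0,-\}$ on the edges, the induced vertex labeling assigns label $0$ to the root and increases the label by $+1$, $0$, $-1$ respectively along an edge marked $+$, $0$, $-$ in the direction away from the root. A vertex is a local maximum if its label is greater than or equal to the labels of all its neighbours in the tree. (Via the Cori–Vauquelin–Schaeffer bijection these trees encode rooted pointed quadrangulations with $e(T)$ faces, and the non-root local maxima of the tree correspond to local maxima of the distance labeling.) *)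

theory Defs
  imports "HOL-Computational_Algebra.Computational_Algebra"
begin

datatype mark = MPlus | MZero | MMinus

fun delta :: "mark \<Rightarrow> int" where
  "delta MPlus = 1" | "delta MZero = 0" | "delta MMinus = -1"

text \<open>Rooted plane trees with marked edges: a vertex is given by the ordered
  list of its children, each child together with the mark of the edge leading
  to it (edges oriented away from the root).\<close>
datatype mtree = Node "(mark \<times> mtree) list"

fun edges :: "mtree \<Rightarrow> nat" where
  "edges (Node cs) = sum_list (map (\<lambda>c. Suc (edges (snd c))) cs)"

fun is_locmax :: "int \<Rightarrow> int \<Rightarrow> mtree \<Rightarrow> bool" where
  "is_locmax lp l (Node ds) = (lp \<le> l \<and> (\<forall>d\<in>set ds. l + delta (fst d) \<le> l))"

fun locmax_below :: "int \<Rightarrow> mtree \<Rightarrow> nat" where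
  "locmax_below l (Node cs) =
     sum_list (map (\<lambda>c. (if is_locmax l (l + delta (fst c)) (snd c) then 1 else 0)
                         + locmax_below (l + delta (fst c)) (snd c)) cs)"

definition locmax :: "mtree \<Rightarrow> nat" where
  "locmax T = locmax_below 0 T"

definition z1 :: "real poly fps" where
  "z1 = Abs_fps (\<lambda>n. \<Sum>T\<in>{T. edges T = n}. monom 1 (locmax T))"

text \<open>The defining quartic, with g = fps_X and frak g = the polynomial variable.\<close>
definition quartic :: "real poly fps \<Rightarrow> bool" where
  "quartic z \<longleftrightarrow>
     fps_const 3 * fps_X ^ 2 * z ^ 4 - fps_const 4 * fps_X * z ^ 3
     + (1 + fps_const 2 * fps_X * fps_const (1 - 2 * [:0, 1:])) * z ^ 2 - 1 = 0"

definition spec :: "real \<Rightarrow> real poly fps \<Rightarrow> real fps" where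
  "spec a z = Abs_fps (\<lambda>n. poly (fps_nth z n) a)"

text \<open>Formal square root (principal branch, constant term sqrt of the constant term).\<close>
definition fps_sqrt :: "real fps \<Rightarrow> real fps" where
  "fps_sqrt f = fps_radical (\<lambda>k x. root k x) 2 f"

end

theory Submission
  imports Defs
begin

lemma UNIV_mark: "(UNIV :: mark set) = {MPlus, MZero, MMinus}"
  using mark.exhaust by auto

lemma delta_ge0: "0 \<le> delta m \<longleftrightarrow> m \<noteq> MMinus" by (cases m) auto
lemma delta_le0: "delta m \<le> 0 \<longleftrightarrow> m \<noteq> MPlus" by (cases m) auto

fun np :: "mtree \<Rightarrow> bool" where "np (Node cs) = (\<forall>c\<in>set cs. fst c \<noteq> MPlus)"

fun lm :: "mtree \<Rightarrow> nat" where
 "lm (Node cs) = sum_list (map (\<lambda>c. (if fst c \<noteq> MMinus \<and> np (snd c) then 1 else 0) + lm (snd c)) cs)"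

lemma islm: "is_locmax l (l + delta m) t = (m \<noteq> MMinus \<and> np t)"
  by (cases t) (auto simp: delta_ge0 delta_le0)

lemma lmb: "locmax_below l T = lm T"
proof (induction l T rule: locmax_below.induct)
  case (1 l cs)
  show ?case using 1 by (auto simp: islm intro!: arg_cong[where f=sum_list] map_cong)
qed

fun cns :: "mark \<Rightarrow> mtree \<Rightarrow> mtree \<Rightarrow> mtree" where "cns m t (Node cs) = Node ((m,t)#cs)"

definition cw :: "mark \<Rightarrow> mtree \<Rightarrow> nat" where
  "cw m t = (if m \<noteq> MMinus \<and> np t then 1 else 0)"

lemma edges_cns: "edges (cns m t c) = Suc (edges t) + edges c" by (cases c) simp
lemma lm_cns: "lm (cns m t c) = cw m t + lm t + lm c" by (cases c) (simp add: cw_def)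
lemma np_cns: "np (cns m t c) = (m \<noteq> MPlus \<and> np c)" by (cases c) simp

lemma S0: "{T. edges T = 0} = {Node []}"
proof -
  have "edges T = 0 \<Longrightarrow> T = Node []" for T by (cases T, rename_tac cs, case_tac cs) auto
  then show ?thesis by auto
qed

lemma S_Suc: "{T. edges T = Suc n} = (\<lambda>(m,t,c). cns m t c) ` (UNIV \<times> {(t,c). edges t + edges c = n})"
proof (intro equalityI subsetI)
  fix T assume "T \<in> {T. edges T = Suc n}"
  then have e: "edges T = Suc n" by simp
  obtain cs where T: "T = Node cs" by (cases T)
  with e obtain m t cs' where "cs = (m,t)#cs'" by (cases cs) auto
  with T e show "T \<in> (\<lambda>(m,t,c). cns m t c) ` (UNIV \<times> {(t,c). edges t + edges c = n})"
    by (auto intro!: image_eqI[where x="(m,t,Node cs')"])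
qed (auto simp: edges_cns)

lemma inj_cns: "inj_on (\<lambda>(m,t,c). cns m t c) A"
proof (rule inj_onI, clarsimp)
  fix m t c m' t' c'
  assume "cns m t c = cns m' t' c'"
  then show "m = m' \<and> t = t' \<and> c = c'" by (cases c; cases c') auto
qed

lemma finS: "finite {T. edges T = n}"
proof (induction n rule: less_induct)
  case (less n)
  show ?case
  proof (cases n)
    case 0 then show ?thesis by (simp add: S0)
  next
    case (Suc k)
    have "{(t,c). edges t + edges c = k} \<subseteq> (\<Union>i\<le>k. {T. edges T = i}) \<times> (\<Union>i\<le>k. {T. edges T = i})"
      by auto
    moreover have "finite ((\<Union>i\<le>k. {T. edges T = i}) \<times> (\<Union>i\<le>k. {T. edges T = i}))"
      using less Suc by auto
    ultimately have "finite {(t,c). edges t + edges c = k}" by (rule finite_subset)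
    then show ?thesis unfolding Suc S_Suc by (simp add: UNIV_mark)
  qed
qed

lemma sum_S_Suc:
  fixes f :: "mtree \<Rightarrow> 'a::comm_semiring_1"
  assumes "\<And>m t c. f (cns m t c) = a m t * b c"
  shows "(\<Sum>T\<in>{T. edges T = Suc n}. f T) =
     (\<Sum>m\<in>UNIV. \<Sum>i\<le>n. (\<Sum>t\<in>{t. edges t = i}. a m t) * (\<Sum>c\<in>{c. edges c = n - i}. b c))"
proof -
  let ?Q = "{(t,c). edges t + edges c = n}"
  have Q: "?Q = (\<Union>i\<in>{..n}. {t. edges t = i} \<times> {c. edges c = n - i})" by auto
  have "(\<Sum>T\<in>{T. edges T = Suc n}. f T) = (\<Sum>p\<in>UNIV \<times> ?Q. f ((\<lambda>(m,t,c). cns m t c) p))"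
    unfolding S_Suc by (rule sum.reindex[OF inj_cns, unfolded comp_def])
  also have "\<dots> = (\<Sum>(m,p)\<in>UNIV \<times> ?Q. a m (fst p) * b (snd p))"
    by (rule sum.cong[OF refl]) (auto simp: assms split_beta)
  also have "\<dots> = (\<Sum>m\<in>UNIV. \<Sum>p\<in>?Q. a m (fst p) * b (snd p))"
    by (rule sum.cartesian_product[symmetric])
  also have "\<dots> = (\<Sum>m\<in>UNIV. \<Sum>i\<le>n. (\<Sum>t\<in>{t. edges t = i}. a m t) * (\<Sum>c\<in>{c. edges c = n - i}. b c))"
  proof (rule sum.cong[OF refl])
    fix m
    have "(\<Sum>p\<in>?Q. a m (fst p) * b (snd p)) =
       (\<Sum>i\<le>n. \<Sum>p\<in>{t. edges t = i} \<times> {c. edges c = n - i}. a m (fst p) * b (snd p))"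
      unfolding Q by (rule sum.UNION_disjoint) (auto simp: finS)
    also have "\<dots> = (\<Sum>i\<le>n. (\<Sum>t\<in>{t. edges t = i}. a m t) * (\<Sum>c\<in>{c. edges c = n - i}. b c))"
      by (auto simp: sum_product sum.cartesian_product split_beta intro!: sum.cong)
    finally show "(\<Sum>p\<in>?Q. a m (fst p) * b (snd p)) = \<dots>" .
  qed
  finally show ?thesis .
qed


definition fo :: "(mtree \<Rightarrow> real poly) \<Rightarrow> real poly fps" where
  "fo h = Abs_fps (\<lambda>n. \<Sum>T\<in>{T. edges T = n}. h T)"

lemma fo_nth: "fo h $ n = (\<Sum>T\<in>{T. edges T = n}. h T)" by (simp add: fo_def)

lemma fo_add: "fo (\<lambda>t. f t + g t) = fo f + fo g"
  by (rule fps_ext) (simp add: fo_nth sum.distrib)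

lemma fo_cmult: "fo (\<lambda>t. c * f t) = fps_const c * fo f"
  by (rule fps_ext) (simp add: fo_nth sum_distrib_left)

lemma fo_zero: "fo (\<lambda>t. 0) = 0"
  by (rule fps_ext) (simp add: fo_nth)

lemma fo_rec:
  assumes "\<And>m t c. f (cns m t c) = a m t * b c"
  shows "fo f = fps_const (f (Node [])) + fps_X * ((\<Sum>m\<in>UNIV. fo (a m)) * fo b)"
proof (rule fps_ext)
  fix n show "fo f $ n = (fps_const (f (Node [])) + fps_X * ((\<Sum>m\<in>UNIV. fo (a m)) * fo b)) $ n"
  proof (cases n)
    case 0 then show ?thesis by (simp add: fo_nth S0)
  next
    case (Suc k)
    have "fo f $ n = (\<Sum>m\<in>UNIV. \<Sum>i\<le>k. fo (a m) $ i * fo b $ (k - i))"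
      unfolding Suc fo_nth by (rule sum_S_Suc[where f=f and a=a and b=b, OF assms])
    also have "\<dots> = ((\<Sum>m\<in>UNIV. fo (a m)) * fo b) $ k"
      by (simp add: sum_distrib_right fps_sum_nth fps_mult_nth atLeast0AtMost)
    finally show ?thesis using Suc by simp
  qed
qed

definition Bf :: "mtree \<Rightarrow> real poly" where "Bf t = monom 1 (lm t)"
definition Af :: "mtree \<Rightarrow> real poly" where "Af t = (if np t then monom 1 (lm t) else 0)"
definition Df :: "mtree \<Rightarrow> real poly" where "Df t = monom 1 (cw MZero t + lm t)"

lemma xmon: "[:0,1:] = (monom 1 1 :: real poly)"
  by (simp add: monom_Suc)

lemma Df_eq: "Df t = Bf t + ([:0,1:] - 1) * Af t"
  by (auto simp: Df_def Bf_def Af_def cw_def xmon mult_monom algebra_simps)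

lemma z1_fo: "z1 = fo Bf"
  by (simp add: z1_def fo_def Bf_def locmax_def lmb)

lemma B_rec: "fo Bf = 1 + fps_X * ((fo Df + fo Df + fo Bf) * fo Bf)"
proof -
  have "fo Bf = fps_const (Bf (Node [])) + fps_X * ((\<Sum>m\<in>UNIV. fo (\<lambda>t. monom 1 (cw m t + lm t))) * fo Bf)"
    by (rule fo_rec) (simp add: Bf_def lm_cns mult_monom)
  moreover have "cw MPlus = cw MZero" "(\<lambda>t. monom 1 (cw MMinus t + lm t)) = Bf"
    by (auto simp: cw_def Bf_def)
  ultimately show ?thesis by (simp add: UNIV_mark Bf_def Df_def[abs_def])
qed

lemma A_rec: "fo Af = 1 + fps_X * ((fo Df + fo Bf) * fo Af)"
proof -
  have "fo Af = fps_const (Af (Node [])) + fps_X * ((\<Sum>m\<in>UNIV. fo (\<lambda>t. if m = MPlus then 0 else monom 1 (cw m t + lm t))) * fo Af)"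
    by (rule fo_rec) (simp add: Af_def lm_cns np_cns mult_monom)
  moreover have "(\<lambda>t. monom 1 (cw MMinus t + lm t)) = Bf"
    by (auto simp: cw_def Bf_def)
  ultimately show ?thesis by (simp add: UNIV_mark Af_def Df_def[abs_def] fo_zero)
qed

lemma D_eq: "fo Df = fo Bf + fps_const ([:0,1:] - 1) * fo Af"
  by (simp add: Df_eq[abs_def] fo_add fo_cmult)


lemma quart_alg:
  fixes B A D X xc :: "'a::idom"
  assumes h1: "B = 1 + X*((D + D + B)*B)" and h2: "A = 1 + X*((D+B)*A)" and h3: "D = B + (xc - 1)*A"
  shows "3*X^2*B^4 - 4*X*B^3 + (1 + 2*X*(1 - 2*xc))*B^2 - 1 = 0"
proof -
  define u where "u = 1 - xc"
  define e1 where "e1 = B - 1 - X*(3*B - 2*u*A)*B"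
  define e2 where "e2 = A - 1 - X*(2*B - u*A)*A"
  have "e1 = 0" using h1 h3 unfolding e1_def u_def by (simp add: algebra_simps)
  moreover have "e2 = 0" using h2 h3 unfolding e2_def u_def by (simp add: algebra_simps)
  moreover have "-(3*X^2*B^4 - 4*X*B^3 + (1 + 2*X*(1 - 2*xc))*B^2 - 1)
      = 4*X*u*B^2*e2 + e1*(e1 - 4*X*u*A*B + 4*X*B^2 - 2*B)"
    unfolding e1_def e2_def u_def by algebra
  ultimately show ?thesis by (metis add_0 minus_equation_iff mult_zero_left mult_zero_right neg_0_equal_iff_equal)
qed

lemma quartic_alt: "quartic z \<longleftrightarrow>
   3*fps_X^2*z^4 - 4*fps_X*z^3 + (1 + 2*fps_X*(1 - 2*fps_const [:0,1:]))*z^2 - 1 = 0"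
proof -
  have "fps_const (1 - 2 * [:0, 1:]) = 1 - 2 * fps_const ([:0, 1:] :: real poly)"
    by (simp add: fps_numeral_fps_const)
  then show ?thesis unfolding quartic_def by (simp only: fps_numeral_fps_const)
qed

lemma z1_quartic: "quartic z1"
  unfolding quartic_alt z1_fo
  by (rule quart_alg[OF B_rec A_rec]) (simp add: D_eq)


lemma z1_0: "z1 $ 0 = 1"
  by (simp add: z1_fo fo_nth S0 Bf_def)

lemma uniq:
  assumes z0: "z$0 = 1" and w0: "w$0 = 1" and qz: "quartic z" and qw: "quartic w"
  shows "z = w"
proof -
  define X :: "real poly fps" where "X = fps_X"
  define xc :: "real poly fps" where "xc = fps_const [:0,1:]"
  define S where "S = 3*X*(z^3+z^2*w+z*w^2+w^3) - 4*(z^2+z*w+w^2) + 2*(1-2*xc)*(z+w)"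
  have Pz: "3*X^2*z^4 - 4*X*z^3 + (1 + 2*X*(1 - 2*xc))*z^2 - 1 = 0"
    using qz unfolding quartic_alt X_def xc_def .
  have Pw: "3*X^2*w^4 - 4*X*w^3 + (1 + 2*X*(1 - 2*xc))*w^2 - 1 = 0"
    using qw unfolding quartic_alt X_def xc_def .
  have "(3*X^2*z^4 - 4*X*z^3 + (1 + 2*X*(1 - 2*xc))*z^2 - 1)
      - (3*X^2*w^4 - 4*X*w^3 + (1 + 2*X*(1 - 2*xc))*w^2 - 1) = (z - w) * (X*S + (z+w))"
    unfolding S_def by algebra
  with Pz Pw have eq: "(z - w) * (X*S + (z+w)) = 0" by simp
  have "(X*S + (z+w)) $ 0 = 2" using z0 w0 by (simp add: X_def)
  then have "X*S + (z+w) \<noteq> 0" by (metis fps_zero_nth zero_neq_numeral)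
  with eq show ?thesis by simp
qed

lemma spec_nth: "spec a f $ n = poly (f $ n) a" by (simp add: spec_def)
lemma spec_add: "spec a (f + g) = spec a f + spec a g" by (rule fps_ext) (simp add: spec_nth)
lemma spec_diff: "spec a (f - g) = spec a f - spec a g" by (rule fps_ext) (simp add: spec_nth)
lemma spec_mult: "spec a (f * g) = spec a f * spec a g"
  by (rule fps_ext) (simp add: spec_nth fps_mult_nth poly_sum)
lemma spec_const: "spec a (fps_const c) = fps_const (poly c a)" by (rule fps_ext) (simp add: spec_nth)
lemma spec_1: "spec a 1 = 1" by (rule fps_ext) (simp add: spec_nth)
lemma spec_numeral: "spec a (numeral k) = numeral k"
  by (simp add: fps_numeral_fps_const spec_const)
lemma spec_X: "spec a fps_X = fps_X" by (rule fps_ext) (simp add: spec_nth)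
lemma spec_power: "spec a (f ^ n) = spec a f ^ n" by (induction n) (simp_all add: spec_1 spec_mult)

lemma spec_quartic:
  assumes "quartic z"
  shows "3*fps_X^2*spec a z^4 - 4*fps_X*spec a z^3 + (1 + 2*fps_X*(1 - 2*fps_const a))*spec a z^2 - 1 = 0"
proof -
  have "spec a (3*fps_X^2*z^4 - 4*fps_X*z^3 + (1 + 2*fps_X*(1 - 2*fps_const [:0,1:]))*z^2 - 1) = spec a 0"
    using assms unfolding quartic_alt by simp
  moreover have "spec a 0 = 0" by (rule fps_ext) (simp add: spec_nth)
  ultimately show ?thesis
    by (simp add: spec_add spec_diff spec_mult spec_power spec_numeral spec_X spec_const spec_1)
qed


lemma sqrt_sol:
  fixes s :: "real fps"
  assumes s0: "s$0 = 1" and h: "fps_const c * fps_X * s^2 - s + 1 = 0"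
  shows "fps_const (2*c) * fps_X * s = 1 - fps_sqrt (1 - fps_const (4*c) * fps_X)"
proof -
  define r where "r = 1 - 2 * fps_const c * fps_X * s"
  define b where "b = 1 - 4 * fps_const c * fps_X"
  have c2: "fps_const (2*c) = 2 * fps_const c" and c4: "fps_const (4*c) = 4 * fps_const c"
    by (simp_all add: fps_numeral_fps_const)
  have "r^2 - b = 4 * fps_const c * fps_X * (fps_const c * fps_X * s^2 - s + 1)"
    unfolding r_def b_def by algebra
  with h have "r^2 = b" by simp
  then have rb: "r^(Suc 1) = b" by (simp add: numeral_2_eq_2)
  have b0: "b $ 0 = 1" by (simp add: b_def)
  have r0: "r $ 0 = 1" by (simp add: r_def)
  have "r = fps_radical (\<lambda>k x. root k x) (Suc 1) b"
    using radical_unique[where r="\<lambda>k x. root k x" and k=1 and b=b and a=r] b0 r0 rb by simp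
  then have "fps_sqrt b = r" by (simp add: fps_sqrt_def numeral_2_eq_2)
  then show ?thesis unfolding c2 c4 b_def r_def by simp
qed

lemma spec1: "fps_const 6 * fps_X * spec 1 z1 = 1 - fps_sqrt (1 - fps_const 12 * fps_X)"
proof -
  define s where "s = spec 1 z1"
  have s0: "s $ 0 = 1" by (simp add: s_def spec_nth z1_0)
  have q: "3*fps_X^2*s^4 - 4*fps_X*s^3 + (1 + 2*fps_X*(1 - 2*fps_const 1))*s^2 - 1 = 0"
    unfolding s_def by (rule spec_quartic[OF z1_quartic])
  have "(3*fps_X*s^2 - s + 1) * (fps_X*s^2 - s - 1)
     = 3*fps_X^2*s^4 - 4*fps_X*s^3 + (1 + 2*fps_X*(1 - 2*1))*s^2 - 1"
    by algebra
  with q have eq: "(3*fps_X*s^2 - s + 1) * (fps_X*s^2 - s - 1) = 0" by simp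
  have "(fps_X*s^2 - s - 1) $ 0 = -2" using s0 by simp
  then have "fps_X*s^2 - s - 1 \<noteq> (0 :: real fps)" by (metis fps_zero_nth zero_neq_neg_numeral)
  with eq have "fps_const 3 * fps_X*s^2 - s + 1 = 0" by (simp add: fps_numeral_fps_const)
  from sqrt_sol[OF s0 this] show ?thesis by (simp add: s_def)
qed

lemma spec0: "fps_const 2 * fps_X * spec 0 z1 = 1 - fps_sqrt (1 - fps_const 4 * fps_X)"
proof -
  define s where "s = spec 0 z1"
  have s0: "s $ 0 = 1" by (simp add: s_def spec_nth z1_0)
  have q: "3*fps_X^2*s^4 - 4*fps_X*s^3 + (1 + 2*fps_X*(1 - 2*fps_const 0))*s^2 - 1 = 0"
    unfolding s_def by (rule spec_quartic[OF z1_quartic])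
  have "(fps_X*s^2 - s + 1) * (3*fps_X*s^2 - s - 1)
     = 3*fps_X^2*s^4 - 4*fps_X*s^3 + (1 + 2*fps_X*(1 - 2*0))*s^2 - 1"
    by algebra
  with q have eq: "(fps_X*s^2 - s + 1) * (3*fps_X*s^2 - s - 1) = 0" by simp
  have "(3*fps_X*s^2 - s - 1) $ 0 = -2" using s0 by simp
  then have "3*fps_X*s^2 - s - 1 \<noteq> (0 :: real fps)" by (metis fps_zero_nth zero_neq_neg_numeral)
  with eq have "fps_const 1 * fps_X*s^2 - s + 1 = 0" by simp
  from sqrt_sol[OF s0 this] show ?thesis by (simp add: s_def)
qed

theorem mainTheorem8:
  shows "fps_nth z1 0 = 1 \<and> quartic z1
         \<and> (\<forall>z. fps_nth z 0 = 1 \<and> quartic z \<longrightarrow> z = z1)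
         \<and> fps_const 6 * fps_X * spec 1 z1 = 1 - fps_sqrt (1 - fps_const 12 * fps_X)
         \<and> fps_const 2 * fps_X * spec 0 z1 = 1 - fps_sqrt (1 - fps_const 4 * fps_X)"
  using z1_0 z1_quartic uniq[OF _ z1_0 _ z1_quartic] spec1 spec0 by blast

end
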